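(* Let $G$ be a finite simple cubic graph with a 3-decomposition $(T,C,M)$, and colour exactly the edges of $T$ green and all other edges black. If $T$ is a homeomorphically irreducible spanning tree (HIST), then $M=\emptyset$. Otherwise there is a finite simple cubic graph $G'$ with fewer vertices than $G$ and a 3-decomposition $(T',C,M')$ of $G'$ (with the same 2-regular part $C$) such that, if exactly the edges of $T'$ are coloured green, then $G$ together with its green/black colouring is obtained from $G'$ together with its colouring by a single Tutte-extension or a single diamond-extension. In particular, every 3-decomposition can be reduced to a 3-decomposition whose spanning tree is a HIST by a finite sequence of Tutte- and diamond-reductions.
   Context: All graphs are finite and simple. A graph is cubic if every vertex has degree 3. A 3-decomposition $(T,C,M)$ of a graph $G$ is a partition of $E(G)$ into the edge sets of a spanning tree $T$, a (possibly empty) 2-regular subgraph $C$ (a vertex-disjoint union of cycles), and a (possibly empty) matching $M$. A HIST (homeomorphically irreducible spanning tree) is a spanning tree without vertices of degree 2. The operations act on graphs whose edges are coloured green or black. Tutte-extension: choose two distinct green edges $x_uy_u$ and $x_vy_v$ (they may share an end); subdivide the first by a new vertex $u$ and the second by a new vertex $v$, the four resulting edges $x_uu,uy_u,x_vv,vy_v$ being green, and add a new black edge $uv$. Diamond-extension: choose a green edge $xy$, delete it, add new vertices $d_1,d_2,d_3,d_4$ with green edges $xd_1, d_1d_3, d_3d_2, d_2d_4, d_4y$ and black edges $d_1d_2, d_3d_4$ (so $d_1,d_2,d_3,d_4$ span a diamond, i.e. $K_4$ minus the edge $d_1d_4$). Tutte-reduction and diamond-reduction are the inverse operations. *)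

theory Defs
  imports Main
begin

definition simple_graph :: "'a set \<Rightarrow> 'a set set \<Rightarrow> bool" where
  "simple_graph V E \<longleftrightarrow> finite V \<and>
     (\<forall>e\<in>E. \<exists>u v. e = {u, v} \<and> u \<noteq> v \<and> u \<in> V \<and> v \<in> V)"

definition degree :: "'a set set \<Rightarrow> 'a \<Rightarrow> nat" where
  "degree F v = card {e \<in> F. v \<in> e}"

definition cubic :: "'a set \<Rightarrow> 'a set set \<Rightarrow> bool" where
  "cubic V E \<longleftrightarrow> simple_graph V E \<and> (\<forall>v\<in>V. degree E v = 3)"

definition reachable :: "'a set set \<Rightarrow> 'a \<Rightarrow> 'a \<Rightarrow> bool" where
  "reachable F u v \<longleftrightarrow> (u, v) \<in> {(x, y). {x, y} \<in> F}\<^sup>*"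

definition connected_on :: "'a set \<Rightarrow> 'a set set \<Rightarrow> bool" where
  "connected_on V F \<longleftrightarrow> (\<forall>u\<in>V. \<forall>v\<in>V. reachable F u v)"

text \<open>A spanning tree: a connected spanning subgraph that is acyclic,
i.e. every edge is a bridge (removing it separates its ends).\<close>
definition spanning_tree :: "'a set \<Rightarrow> 'a set set \<Rightarrow> 'a set set \<Rightarrow> bool" where
  "spanning_tree V E T \<longleftrightarrow> T \<subseteq> E \<and> connected_on V T \<and>
     (\<forall>u v. {u, v} \<in> T \<longrightarrow> \<not> reachable (T - {{u, v}}) u v)"

definition two_regular :: "'a set set \<Rightarrow> 'a set set \<Rightarrow> bool" where
  "two_regular E C \<longleftrightarrow> C \<subseteq> E \<and> (\<forall>v. degree C v = 0 \<or> degree C v = 2)"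

definition matching :: "'a set set \<Rightarrow> 'a set set \<Rightarrow> bool" where
  "matching E M \<longleftrightarrow> M \<subseteq> E \<and> (\<forall>v. degree M v \<le> 1)"

definition three_decomposition ::
  "'a set \<Rightarrow> 'a set set \<Rightarrow> 'a set set \<Rightarrow> 'a set set \<Rightarrow> 'a set set \<Rightarrow> bool" where
  "three_decomposition V E T C M \<longleftrightarrow>
     spanning_tree V E T \<and> two_regular E C \<and> matching E M \<and>
     T \<union> C \<union> M = E \<and> T \<inter> C = {} \<and> T \<inter> M = {} \<and> C \<inter> M = {}"

definition HIST :: "'a set \<Rightarrow> 'a set set \<Rightarrow> 'a set set \<Rightarrow> bool" where
  "HIST V E T \<longleftrightarrow> spanning_tree V E T \<and> (\<forall>v\<in>V. degree T v \<noteq> 2)"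

text \<open>Coloured graphs (V, E, T): the green edges are exactly T, the black
edges are E - T. tutte_ext G' G: G is obtained from G' by a Tutte-extension.\<close>
definition tutte_ext ::
  "'a set \<times> 'a set set \<times> 'a set set \<Rightarrow> 'a set \<times> 'a set set \<times> 'a set set \<Rightarrow> bool" where
  "tutte_ext G' G \<longleftrightarrow> (case G' of (V', E', T') \<Rightarrow> case G of (V, E, T) \<Rightarrow>
     (\<exists>xu yu xv yv u v.
        {xu, yu} \<in> T' \<and> {xv, yv} \<in> T' \<and> {xu, yu} \<noteq> {xv, yv} \<and>
        u \<notin> V' \<and> v \<notin> V' \<and> u \<noteq> v \<and>
        V = V' \<union> {u, v} \<and>
        E = (E' - {{xu, yu}, {xv, yv}}) \<union> {{xu, u}, {u, yu}, {xv, v}, {v, yv}, {u, v}} \<and>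
        T = (T' - {{xu, yu}, {xv, yv}}) \<union> {{xu, u}, {u, yu}, {xv, v}, {v, yv}}))"

definition diamond_ext ::
  "'a set \<times> 'a set set \<times> 'a set set \<Rightarrow> 'a set \<times> 'a set set \<times> 'a set set \<Rightarrow> bool" where
  "diamond_ext G' G \<longleftrightarrow> (case G' of (V', E', T') \<Rightarrow> case G of (V, E, T) \<Rightarrow>
     (\<exists>x y d1 d2 d3 d4.
        {x, y} \<in> T' \<and>
        d1 \<notin> V' \<and> d2 \<notin> V' \<and> d3 \<notin> V' \<and> d4 \<notin> V' \<and>
        d1 \<noteq> d2 \<and> d1 \<noteq> d3 \<and> d1 \<noteq> d4 \<and> d2 \<noteq> d3 \<and> d2 \<noteq> d4 \<and> d3 \<noteq> d4 \<and>
        V = V' \<union> {d1, d2, d3, d4} \<and>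
        E = (E' - {{x, y}}) \<union>
              {{x, d1}, {d1, d3}, {d3, d2}, {d2, d4}, {d4, y}, {d1, d2}, {d3, d4}} \<and>
        T = (T' - {{x, y}}) \<union> {{x, d1}, {d1, d3}, {d3, d2}, {d2, d4}, {d4, y}}))"

definition dec_step ::
  "'a set \<times> 'a set set \<times> 'a set set \<times> 'a set set \<times> 'a set set \<Rightarrow>
   'a set \<times> 'a set set \<times> 'a set set \<times> 'a set set \<times> 'a set set \<Rightarrow> bool" where
  "dec_step s' s \<longleftrightarrow> (case s' of (V', E', T', C', M') \<Rightarrow> case s of (V, E, T, C, M) \<Rightarrow>
     cubic V' E' \<and> three_decomposition V' E' T' C' M' \<and>
     cubic V E \<and> three_decomposition V E T C M \<and> C' = C \<and>
     (tutte_ext (V', E', T') (V, E, T) \<or> diamond_ext (V', E', T') (V, E, T)))"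

end

theory Submission
  imports Defs
begin


definition nb :: "'a set set \<Rightarrow> 'a \<Rightarrow> 'a set set" where
  "nb F v = {e \<in> F. v \<in> e}"

lemma degree_nb: "degree F v = card (nb F v)"
  by (simp add: degree_def nb_def)

definition tree :: "'a set \<Rightarrow> 'a set set \<Rightarrow> bool" where
  "tree V T \<longleftrightarrow> connected_on V T \<and> (\<forall>u v. {u, v} \<in> T \<longrightarrow> \<not> reachable (T - {{u, v}}) u v)"

lemma spanning_tree_iff: "spanning_tree V E T \<longleftrightarrow> T \<subseteq> E \<and> tree V T"
  by (auto simp: spanning_tree_def tree_def)

lemma reach_refl[simp]: "reachable F a a"
  by (simp add: reachable_def)

lemma reach_edge: "{a, b} \<in> F \<Longrightarrow> reachable F a b"
  by (auto simp: reachable_def)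

lemma reach_trans: "reachable F a b \<Longrightarrow> reachable F b c \<Longrightarrow> reachable F a c"
  unfolding reachable_def by (rule rtrancl_trans)

lemma reach_step: "reachable F a b \<Longrightarrow> {b, c} \<in> F \<Longrightarrow> reachable F a c"
  by (meson reach_edge reach_trans)

lemma reach_map:
  assumes "\<And>a b. {a, b} \<in> F \<Longrightarrow> reachable G a b" "reachable F p q"
  shows "reachable G p q"
  using assms(2) unfolding reachable_def
proof (induction rule: rtrancl_induct)
  case base then show ?case by simp
next
  case (step y z)
  then show ?case using assms(1)[of y z] unfolding reachable_def by auto
qed

lemma reach_sym: "reachable F a b \<Longrightarrow> reachable F b a"
  unfolding reachable_def
proof (induction rule: rtrancl_induct)
  case base then show ?case by simp
next
  case (step y z)
  have "{z, y} \<in> F" using step(2) by (simp add: insert_commute)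
  then have "(z, y) \<in> {(x, y). {x, y} \<in> F}\<^sup>*" by auto
  then show ?case using step(3) by (rule rtrancl_trans)
qed

lemma reach_mono: "reachable F a b \<Longrightarrow> F \<subseteq> G \<Longrightarrow> reachable G a b"
  by (rule reach_map[where F=F]) (auto intro: reach_edge)

lemma reach_closed:
  assumes "\<And>a b. {a, b} \<in> F \<Longrightarrow> a \<in> S \<Longrightarrow> b \<in> S" "a \<in> S" "reachable F a b"
  shows "b \<in> S"
  using assms(3,2) unfolding reachable_def
  by (induction rule: rtrancl_induct) (auto intro: assms(1))

lemma reach_first:
  assumes "reachable F a b" "a \<noteq> b" shows "\<exists>c. {a, c} \<in> F"
  using assms unfolding reachable_def
  by (induction rule: converse_rtrancl_induct) auto

lemma tree_no_cycle:
  "tree V T \<Longrightarrow> {p, q} \<in> T \<Longrightarrow> reachable (T - {{p, q}}) p q \<Longrightarrow> False"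
  by (auto simp: tree_def)

lemma t1: "nb T u = {{u, x}, {u, y}} \<Longrightarrow> {u, c} \<in> T \<Longrightarrow> c = x \<or> c = y"
proof -
  assume a: "nb T u = {{u, x}, {u, y}}" "{u, c} \<in> T"
  have "{u, c} \<in> nb T u" using a(2) by (simp add: nb_def)
  then show "c = x \<or> c = y" using a by (auto simp: doubleton_eq_iff)
qed
lemma t2: "{c, d} \<in> T \<Longrightarrow> c \<noteq> u \<Longrightarrow> d \<noteq> u \<Longrightarrow> {c, d} \<in> T - {{u, x}, {u, y}} \<union> {{x, y}}"
  by (auto simp: doubleton_eq_iff)
lemma t3: "nb T u = {{u, x}, {u, y}} \<Longrightarrow> {u, x} \<in> T \<and> {u, y} \<in> T"
proof -
  assume a: "nb T u = {{u, x}, {u, y}}"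
  have "{u, x} \<in> nb T u" "{u, y} \<in> nb T u" using a by auto
  then show ?thesis by (simp add: nb_def)
qed
lemma tree_suppress:
  assumes tr: "tree V T" and uV: "u \<in> V" and nbu: "nb T u = {{u, x}, {u, y}}"
    and xy: "x \<noteq> y" and ux: "u \<noteq> x" and uy: "u \<noteq> y"
  shows "tree (V - {u}) (T - {{u, x}, {u, y}} \<union> {{x, y}})"
proof -
  define T1 where "T1 = T - {{u, x}, {u, y}} \<union> {{x, y}}"
  have inT: "{u, x} \<in> T" "{u, y} \<in> T" using t3[OF nbu] by auto
  have nbu': "\<And>c. {u, c} \<in> T \<Longrightarrow> c = x \<or> c = y" using t1[OF nbu] by blast
  have conn: "reachable T1 a b" if a: "a \<in> V - {u}" and b: "b \<in> V - {u}" for a b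
  proof -
    have "reachable T a b" using tr a b by (auto simp: tree_def connected_on_def)
    then have "(b \<noteq> u \<longrightarrow> reachable T1 a b) \<and> (b = u \<longrightarrow> reachable T1 a x \<and> reachable T1 a y)"
      unfolding reachable_def
    proof (induction rule: rtrancl_induct)
      case base then show ?case using a by (simp add: reachable_def[symmetric])
    next
      case (step c d)
      have IH: "(c \<noteq> u \<longrightarrow> reachable T1 a c) \<and> (c = u \<longrightarrow> reachable T1 a x \<and> reachable T1 a y)"
        using step(3) by (simp add: reachable_def)
      have cd: "{c, d} \<in> T" using step(2) by simp
      have xyT1: "{x, y} \<in> T1" "{y, x} \<in> T1" by (auto simp: T1_def insert_commute)
      have goal: "(d \<noteq> u \<longrightarrow> reachable T1 a d) \<and> (d = u \<longrightarrow> reachable T1 a x \<and> reachable T1 a y)"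
      proof (cases "c = u")
        case True
        then have dxy: "d = x \<or> d = y" using nbu' cd by simp
        then have "d \<noteq> u" using ux uy by blast
        then show ?thesis using IH True dxy by auto
      next
        case False
        note cu = False
        show ?thesis
        proof (cases "d = u")
          case True
          then have "{u, c} \<in> T" using cd by (simp add: insert_commute)
          then have cxy: "c = x \<or> c = y" using nbu' by simp
          have rc: "reachable T1 a c" using IH cu by blast
          have "reachable T1 a x \<and> reachable T1 a y"
          proof (cases "c = x")
            case True
            then show ?thesis using rc reach_step[OF rc[unfolded True] xyT1(1)] by simp
          next
            case False
            then have "c = y" using cxy by blast
            then show ?thesis using rc reach_step[OF rc[unfolded \<open>c = y\<close>] xyT1(2)] by simp
          qed
          then show ?thesis using True by blast
        next
          case False
          have "{c, d} \<in> T1" using cd cu False by (auto simp: T1_def doubleton_eq_iff)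
          moreover have "reachable T1 a c" using IH cu by blast
          ultimately have "reachable T1 a d" by (rule reach_step[rotated])
          then show ?thesis using False by blast
        qed
      qed
      then show ?case by (simp add: reachable_def)
    qed
    then show ?thesis using b by simp
  qed
  have bridge: "\<not> reachable (T1 - {{p, q}}) p q" if pq: "{p, q} \<in> T1" for p q
  proof
    assume r: "reachable (T1 - {{p, q}}) p q"
    show False
    proof (cases "{p, q} = {x, y}")
      case True
      have sub: "T1 - {{p, q}} \<subseteq> T - {{u, x}}"
      proof
        fix e assume "e \<in> T1 - {{p, q}}"
        then have "e \<in> T" "e \<noteq> {u, x}" unfolding T1_def using True by blast+
        then show "e \<in> T - {{u, x}}" by blast
      qed
      have r2: "reachable (T - {{u, x}}) p q" using reach_mono[OF r sub] .
      have "reachable (T - {{u, x}}) x y"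
      proof (cases "p = x")
        case True
        then have "q = y" using \<open>{p, q} = {x, y}\<close> xy by (metis doubleton_eq_iff)
        then show ?thesis using r2 True by simp
      next
        case False
        then have "p = y" "q = x" using \<open>{p, q} = {x, y}\<close> by (auto simp: doubleton_eq_iff)
        then show ?thesis using reach_sym[OF r2] by simp
      qed
      moreover have "{y, u} \<in> T - {{u, x}}"
      proof -
        have "{y, u} = {u, y}" by (rule insert_commute)
        moreover have "{u, y} \<noteq> {u, x}" using xy by (simp add: doubleton_eq_iff)
        ultimately show ?thesis using inT by simp
      qed
      ultimately have "reachable (T - {{u, x}}) x u" by (rule reach_step)
      then have "reachable (T - {{u, x}}) u x" by (rule reach_sym)
      then show False by (rule tree_no_cycle[OF tr inT(1)])
    next
      case False
      have pqT: "{p, q} \<in> T" "{p, q} \<noteq> {u, x}" "{p, q} \<noteq> {u, y}"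
        using pq False by (auto simp: T1_def)
      have "reachable (T - {{p, q}}) p q"
      proof (rule reach_map[OF _ r])
        fix a b assume ab: "{a, b} \<in> T1 - {{p, q}}"
        show "reachable (T - {{p, q}}) a b"
        proof (cases "{a, b} = {x, y}")
          case True
          have e1: "{x, u} \<in> T - {{p, q}}" "{u, y} \<in> T - {{p, q}}"
            using inT pqT by (auto simp: insert_commute)
          have e2: "{y, u} \<in> T - {{p, q}}" "{u, x} \<in> T - {{p, q}}"
            using inT pqT by (auto simp: insert_commute)
          have "reachable (T - {{p, q}}) x y"
            using reach_step[OF reach_edge[OF e1(1)] e1(2)] .
          moreover have "reachable (T - {{p, q}}) y x"
            using reach_step[OF reach_edge[OF e2(1)] e2(2)] .
          ultimately show ?thesis using True by (auto simp: doubleton_eq_iff)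
        next
          case False
          then have "{a, b} \<in> T - {{p, q}}" using ab by (auto simp: T1_def)
          then show ?thesis by (rule reach_edge)
        qed
      qed
      then show False by (rule tree_no_cycle[OF tr pqT(1)])
    qed
  qed
  show ?thesis unfolding tree_def connected_on_def T1_def[symmetric]
    using conn bridge by blast
qed



definition supp :: "'a set set \<Rightarrow> 'a \<Rightarrow> 'a \<Rightarrow> 'a \<Rightarrow> 'a set set" where
  "supp F u x y = F - {{u, x}, {u, y}} \<union> {{x, y}}"

definition dinv :: "'a set \<Rightarrow> 'a set set \<Rightarrow> 'a set set \<Rightarrow> 'a set set \<Rightarrow> bool" where
  "dinv V E T R \<longleftrightarrow> simple_graph V E \<and> tree V T \<and> E = T \<union> R \<and> T \<inter> R = {}"

lemma simple_finite: "simple_graph V E \<Longrightarrow> finite E"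
proof -
  assume s: "simple_graph V E"
  then have "E \<subseteq> Pow V" by (fastforce simp: simple_graph_def)
  moreover have "finite (Pow V)" using s by (simp add: simple_graph_def)
  ultimately show ?thesis by (rule finite_subset)
qed

lemma simple_edge:
  assumes "simple_graph V E" "{a, b} \<in> E" shows "a \<noteq> b" "a \<in> V" "b \<in> V"
proof -
  obtain u v where "{a, b} = {u, v}" "u \<noteq> v" "u \<in> V" "v \<in> V"
    using assms unfolding simple_graph_def by blast
  then show "a \<noteq> b" "a \<in> V" "b \<in> V" by (auto simp: doubleton_eq_iff)
qed

lemma simple_subset: "simple_graph V E \<Longrightarrow> F \<subseteq> E \<Longrightarrow> simple_graph V F"
  unfolding simple_graph_def by blast

lemma nb_finite: "finite E \<Longrightarrow> finite (nb E v)"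
  by (simp add: nb_def)

lemma doubleton_same: "{a, b} = {a, c} \<longleftrightarrow> b = c"
  by (auto simp: doubleton_eq_iff)

lemma nb_supp_other:
  "v \<noteq> u \<Longrightarrow> v \<noteq> x \<Longrightarrow> v \<noteq> y \<Longrightarrow> nb (supp F u x y) v = nb F v"
  by (auto simp: nb_def supp_def)

lemma nb_supp_x:
  "x \<noteq> u \<Longrightarrow> x \<noteq> y \<Longrightarrow> nb (supp F u x y) x = nb F x - {{u, x}} \<union> {{x, y}}"
  by (auto simp: nb_def supp_def)

lemma supp_comm: "supp F u x y = supp F u y x"
  by (auto simp: supp_def insert_commute)

lemma nb_supp_y:
  "y \<noteq> u \<Longrightarrow> x \<noteq> y \<Longrightarrow> nb (supp F u x y) y = nb F y - {{u, y}} \<union> {{y, x}}"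
  using nb_supp_x[of y u x F] by (simp add: supp_comm)

lemma nb_del: "nb (F - {e}) v = nb F v - {e}"
  by (auto simp: nb_def)

lemma nb_del_other: "v \<notin> e \<Longrightarrow> nb (F - {e}) v = nb F v"
  by (auto simp: nb_def)

lemma nb_in: "e \<in> nb F v \<longleftrightarrow> e \<in> F \<and> v \<in> e"
  by (simp add: nb_def)

lemma card_swap:
  assumes "finite S" "a \<in> S" "b \<notin> S" shows "card (S - {a} \<union> {b}) = card S"
proof -
  have "card (S - {a} \<union> {b}) = card (insert b (S - {a}))" by simp
  also have "\<dots> = Suc (card (S - {a}))" using assms by simp
  also have "\<dots> = card S" using assms(1,2) by (rule card_Suc_Diff1)
  finally show ?thesis .
qed

lemma supp_facts:
  assumes s: "simple_graph V E" and uV: "u \<in> V" and nbu: "nb E u = {{u, x}, {u, y}}"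
    and xy: "x \<noteq> y" and nxy: "{x, y} \<notin> E"
  shows "simple_graph (V - {u}) (supp E u x y)"
    and "\<And>v. v \<in> V - {u} \<Longrightarrow> degree (supp E u x y) v = degree E v"
    and "u \<noteq> x" "u \<noteq> y" "x \<in> V" "y \<in> V" "{u, x} \<in> E" "{u, y} \<in> E"
proof -
  have ux: "{u, x} \<in> E" and uy: "{u, y} \<in> E"
    using nbu by (auto simp: set_eq_iff nb_in)
  show "{u, x} \<in> E" "{u, y} \<in> E" by (fact ux, fact uy)
  show ne: "u \<noteq> x" "u \<noteq> y" "x \<in> V" "y \<in> V"
    using simple_edge[OF s ux] simple_edge[OF s uy] by auto
  show "simple_graph (V - {u}) (supp E u x y)"
    unfolding simple_graph_def
  proof
    show "finite (V - {u})" using s by (simp add: simple_graph_def)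
    show "\<forall>e\<in>supp E u x y. \<exists>a b. e = {a, b} \<and> a \<noteq> b \<and> a \<in> V - {u} \<and> b \<in> V - {u}"
    proof
      fix e assume e: "e \<in> supp E u x y"
      show "\<exists>a b. e = {a, b} \<and> a \<noteq> b \<and> a \<in> V - {u} \<and> b \<in> V - {u}"
      proof (cases "e = {x, y}")
        case True
        then show ?thesis using ne xy by blast
      next
        case False
        then have eE: "e \<in> E" "e \<noteq> {u, x}" "e \<noteq> {u, y}" using e by (auto simp: supp_def)
        then obtain a b where ab: "e = {a, b}" "a \<noteq> b" "a \<in> V" "b \<in> V"
          using s unfolding simple_graph_def by blast
        have "u \<notin> e"
        proof
          assume "u \<in> e"
          then have "e \<in> nb E u" using eE by (simp add: nb_in)
          then show False using eE nbu by blast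
        qed
        then show ?thesis using ab by blast
      qed
    qed
  qed
  fix v assume v: "v \<in> V - {u}"
  have fin: "finite (nb E v)" using nb_finite[OF simple_finite[OF s]] .
  show "degree (supp E u x y) v = degree E v"
  proof (cases "v = x")
    case True
    have "card (nb E x - {{u, x}} \<union> {{x, y}}) = card (nb E x)"
      by (rule card_swap) (use fin True ux nxy in \<open>auto simp: nb_in\<close>)
    then show ?thesis using True nb_supp_x[OF ne(1)[symmetric] xy, of E]
      by (simp add: degree_nb)
  next
    case False
    note vx = False
    show ?thesis
    proof (cases "v = y")
      case True
      have "card (nb E y - {{u, y}} \<union> {{y, x}}) = card (nb E y)"
        by (rule card_swap) (use fin True uy nxy in \<open>auto simp: nb_in insert_commute\<close>)
      then show ?thesis using True nb_supp_y[OF ne(2)[symmetric] xy, of E]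
        by (simp add: degree_nb)
    next
      case False
      then show ?thesis using vx v nb_supp_other[of v u x y E] by (simp add: degree_nb)
    qed
  qed
qed

lemma inv_supp:
  assumes I: "dinv V E T R" and uV: "u \<in> V" and nbu: "nb E u = {{u, x}, {u, y}}"
    and xy: "x \<noteq> y" and nxy: "{x, y} \<notin> E" and uxT: "{u, x} \<in> T" and uyT: "{u, y} \<in> T"
  shows "dinv (V - {u}) (supp E u x y) (supp T u x y) R"
proof -
  have s: "simple_graph V E" and tr: "tree V T" and ETR: "E = T \<union> R" and dj: "T \<inter> R = {}"
    using I by (auto simp: dinv_def)
  note F = supp_facts[OF s uV nbu xy nxy]
  have nbT: "nb T u = {{u, x}, {u, y}}"
  proof
    show "nb T u \<subseteq> {{u, x}, {u, y}}" using nbu ETR by (auto simp: nb_def)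
    show "{{u, x}, {u, y}} \<subseteq> nb T u" using uxT uyT by (auto simp: nb_def)
  qed
  have tr': "tree (V - {u}) (supp T u x y)"
    unfolding supp_def by (rule tree_suppress[OF tr uV nbT xy F(3) F(4)])
  have "{u, x} \<notin> R" "{u, y} \<notin> R" "{x, y} \<notin> R" using uxT uyT dj nxy ETR by auto
  then have "supp E u x y = supp T u x y \<union> R" "supp T u x y \<inter> R = {}"
    using ETR dj by (auto simp: supp_def)
  then show ?thesis using F(1) tr' by (simp add: dinv_def)
qed

lemma inv_del:
  assumes "dinv V E T R" "e \<in> R" shows "dinv V (E - {e}) T (R - {e})"
proof -
  have "simple_graph V (E - {e})" using assms simple_subset[of V E "E - {e}"] by (auto simp: dinv_def)
  moreover have "E - {e} = T \<union> (R - {e})" using assms by (auto simp: dinv_def)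
  ultimately show ?thesis using assms by (auto simp: dinv_def)
qed



lemma edge_other:
  assumes "simple_graph V E" "e \<in> E" "v \<in> e" shows "\<exists>a. e = {v, a} \<and> a \<noteq> v \<and> a \<in> V"
proof -
  obtain p q where "e = {p, q}" "p \<noteq> q" "p \<in> V" "q \<in> V" using assms unfolding simple_graph_def by blast
  then show ?thesis using assms(3) by (auto simp: insert_commute)
qed

lemma reach_edge': "{b, a} \<in> F \<Longrightarrow> reachable F a b"
  by (rule reach_edge) (simp add: insert_commute)

lemma nb2_edge: "nb F v = {{v, a}, {v, b}} \<Longrightarrow> {v, c} \<in> F \<Longrightarrow> c = a \<or> c = b"
proof -
  assume a: "nb F v = {{v, a}, {v, b}}" "{v, c} \<in> F"
  have "{v, c} \<in> nb F v" using a(2) by (simp add: nb_def)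
  then show "c = a \<or> c = b" using a(1) by (auto simp: doubleton_eq_iff)
qed

lemma nb3_edge: "nb F v = {{v, a}, {v, b}, {v, w}} \<Longrightarrow> {v, c} \<in> F \<Longrightarrow> c = a \<or> c = b \<or> c = w"
proof -
  assume a: "nb F v = {{v, a}, {v, b}, {v, w}}" "{v, c} \<in> F"
  have "{v, c} \<in> nb F v" using a(2) by (simp add: nb_def)
  then show ?thesis using a(1) by (auto simp: doubleton_eq_iff)
qed

lemma nb1_edge: "nb F v = {{v, a}} \<Longrightarrow> {v, c} \<in> F \<Longrightarrow> c = a"
proof -
  assume a: "nb F v = {{v, a}}" "{v, c} \<in> F"
  have "{v, c} \<in> nb F v" using a(2) by (simp add: nb_def)
  then show ?thesis using a(1) by (auto simp: doubleton_eq_iff)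
qed

lemma nb_mem: "e \<in> nb F v \<Longrightarrow> e \<in> F" by (simp add: nb_def)

locale dec =
  fixes V :: "'a set" and E T C M :: "'a set set"
  assumes cub: "cubic V E" and td: "three_decomposition V E T C M"
begin

lemma s: "simple_graph V E" using cub by (simp add: cubic_def)
lemma finE: "finite E" using simple_finite[OF s] .
lemma finV: "finite V" using s by (simp add: simple_graph_def)
lemma deg3: "v \<in> V \<Longrightarrow> degree E v = 3" using cub by (simp add: cubic_def)
lemma TE: "T \<subseteq> E" and tr: "tree V T" using td by (auto simp: three_decomposition_def spanning_tree_iff)
lemma CE: "C \<subseteq> E" and ME: "M \<subseteq> E" using td by (auto simp: three_decomposition_def two_regular_def matching_def)
lemma Eu: "E = T \<union> C \<union> M" using td by (simp add: three_decomposition_def)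
lemma dj: "T \<inter> C = {}" "T \<inter> M = {}" "C \<inter> M = {}" using td by (auto simp: three_decomposition_def)
lemma degC: "degree C v = 0 \<or> degree C v = 2" using td by (simp add: three_decomposition_def two_regular_def)
lemma degM: "degree M v \<le> 1" using td by (simp add: three_decomposition_def matching_def)
lemma finT: "finite T" using finite_subset[OF TE finE] .
lemma finC: "finite C" using finite_subset[OF CE finE] .
lemma finM: "finite M" using finite_subset[OF ME finE] .

lemma inv0: "dinv V E T (C \<union> M)"
proof -
  have "E = T \<union> (C \<union> M)" using Eu by (simp add: Un_assoc)
  moreover have "T \<inter> (C \<union> M) = {}" using dj by (simp add: Int_Un_distrib)
  ultimately show ?thesis using s tr by (simp add: dinv_def)
qed

lemma edgeE: "{a, b} \<in> E \<Longrightarrow> a \<noteq> b \<and> a \<in> V \<and> b \<in> V"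
  using simple_edge[OF s] by blast

lemma disjTM: "{a, b} \<in> T \<Longrightarrow> {c, d} \<in> M \<Longrightarrow> {a, b} \<noteq> {c, d}"
  using dj(2) by (metis IntI empty_iff)
lemma disjTC: "{a, b} \<in> T \<Longrightarrow> {c, d} \<in> C \<Longrightarrow> {a, b} \<noteq> {c, d}"
  using dj(1) by (metis IntI empty_iff)

lemma deg_sum: "degree E v = degree T v + degree C v + degree M v"
proof -
  have "nb E v = nb T v \<union> nb C v \<union> nb M v" using Eu by (auto simp: nb_def)
  moreover have "card (nb T v \<union> nb C v \<union> nb M v) = card (nb T v) + card (nb C v) + card (nb M v)"
  proof -
    have f: "finite (nb T v)" "finite (nb C v)" "finite (nb M v)"
      using finT finC finM by (auto simp: nb_def)
    have "card (nb T v \<union> nb C v \<union> nb M v) = card (nb T v \<union> nb C v) + card (nb M v)"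
      by (rule card_Un_disjoint) (use f dj in \<open>auto simp: nb_def\<close>)
    also have "card (nb T v \<union> nb C v) = card (nb T v) + card (nb C v)"
      by (rule card_Un_disjoint) (use f dj in \<open>auto simp: nb_def\<close>)
    finally show ?thesis .
  qed
  ultimately show ?thesis by (simp add: degree_nb)
qed

lemma T_pos:
  assumes "v \<in> V" "w \<in> V" "v \<noteq> w" shows "degree T v \<ge> 1"
proof -
  have "reachable T v w" using tr assms by (auto simp: tree_def connected_on_def)
  then obtain c where "{v, c} \<in> T" using reach_first[of T v w] assms(3) by auto
  then have "{v, c} \<in> nb T v" by (simp add: nb_def)
  moreover have "finite (nb T v)" using finT by (simp add: nb_def)
  ultimately have "card (nb T v) \<noteq> 0" by auto
  then show ?thesis by (simp add: degree_nb)
qed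

lemma M_edge_deg:
  assumes vw: "{v, w} \<in> M"
  shows "degree T v = 2" "degree C v = 0" "nb M v = {{v, w}}"
proof -
  have e: "v \<noteq> w" "v \<in> V" "w \<in> V" using edgeE vw ME by auto
  have fin: "finite (nb M v)" using finM by (simp add: nb_def)
  have inM: "{v, w} \<in> nb M v" using vw by (simp add: nb_def)
  then have "card (nb M v) \<noteq> 0" using fin by auto
  then have "card (nb M v) \<ge> 1" by simp
  then have dM: "degree M v = 1" using degM[of v] by (simp add: degree_nb)
  then have "card (nb M v) = 1" by (simp add: degree_nb)
  then obtain z where "nb M v = {z}" by (auto simp: card_1_singleton_iff)
  then show "nb M v = {{v, w}}" using inM by simp
  have "degree T v \<ge> 1" using T_pos e by blast
  moreover have "degree E v = 3" using deg3 e by blast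
  ultimately show "degree C v = 0" "degree T v = 2" using deg_sum[of v] dM degC[of v] by auto
qed

lemma C_edge_deg:
  assumes vw: "{v, w} \<in> C"
  shows "degree T v = 1" "degree M v = 0"
proof -
  have e: "v \<noteq> w" "v \<in> V" "w \<in> V" using edgeE vw CE by auto
  have fin: "finite (nb C v)" using finC by (simp add: nb_def)
  have inC: "{v, w} \<in> nb C v" using vw by (simp add: nb_def)
  then have "card (nb C v) \<noteq> 0" using fin by auto
  then have dC: "degree C v = 2" using degC[of v] by (simp add: degree_nb)
  have "degree T v \<ge> 1" using T_pos e by blast
  moreover have "degree E v = 3" using deg3 e by blast
  ultimately show "degree T v = 1" "degree M v = 0" using deg_sum[of v] dC by auto
qed

lemma deg2_M:
  assumes "v \<in> V" "degree T v = 2" shows "\<exists>w. {v, w} \<in> M"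
proof -
  have "degree E v = 3" using deg3 assms by blast
  then have "degree M v = 1" using deg_sum[of v] degC[of v] degM[of v] assms by auto
  then have "nb M v \<noteq> {}" by (auto simp: degree_nb)
  then obtain e where "e \<in> M" "v \<in> e" by (auto simp: nb_def)
  then show ?thesis using edge_other[OF s, of e v] ME by blast
qed

lemma nbT2:
  assumes "degree T v = 2" "{v, a} \<in> T" shows "\<exists>b. b \<noteq> a \<and> nb T v = {{v, a}, {v, b}}"
proof -
  have c2: "card (nb T v) = 2" using assms(1) by (simp add: degree_nb)
  have va: "{v, a} \<in> nb T v" using assms(2) by (simp add: nb_def)
  have fin: "finite (nb T v)" using finT by (simp add: nb_def)
  have "card (nb T v - {{v, a}}) = 1" using c2 va fin by simp
  then obtain f where f1: "nb T v - {{v, a}} = {f}" by (auto simp: card_1_singleton_iff)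
  then have f: "nb T v = {{v, a}, f}" "f \<noteq> {v, a}" using va by auto
  have "f \<in> nb T v" using f(1) by simp
  then have "f \<in> T" "v \<in> f" by (simp_all add: nb_in)
  then obtain b where b: "f = {v, b}" using edge_other[OF s, of f v] TE by auto
  have "b \<noteq> a" using f(2) b by auto
  then show ?thesis using f b by auto
qed

lemma nbT1:
  assumes "degree T v = 1" "{v, a} \<in> T" shows "nb T v = {{v, a}}"
proof -
  obtain e where e: "nb T v = {e}" using assms(1) by (auto simp: degree_nb card_1_singleton_iff)
  have "{v, a} \<in> nb T v" using assms(2) by (simp add: nb_def)
  then show ?thesis using e by simp
qed

lemma nbE_M:
  assumes vw: "{v, w} \<in> M" and nbT: "nb T v = {{v, a}, {v, b}}"
  shows "nb E v = {{v, a}, {v, b}, {v, w}}"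
proof -
  have "degree C v = 0" using M_edge_deg[OF vw] by simp
  then have "nb C v = {}" using finC by (simp add: degree_nb nb_def)
  moreover have "nb E v = nb T v \<union> nb C v \<union> nb M v" using Eu by (auto simp: nb_def)
  ultimately show ?thesis using nbT M_edge_deg(3)[OF vw] by (simp add: insert_commute)
qed

lemma rT: "{a, b} \<in> T \<Longrightarrow> {a, b} \<noteq> e \<Longrightarrow> reachable (T - {e}) a b"
  by (rule reach_edge) simp
lemma rT': "{b, a} \<in> T \<Longrightarrow> {b, a} \<noteq> e \<Longrightarrow> reachable (T - {e}) a b"
  by (rule reach_edge') simp

lemma no_tri:
  assumes "{a, b} \<in> T" "{b, c} \<in> T" "a \<noteq> c" shows "{a, c} \<notin> T"
proof
  assume ac: "{a, c} \<in> T"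
  have ne: "a \<noteq> b" "b \<noteq> c" using edgeE assms TE by blast+
  have "{a, b} \<noteq> {a, c}" "{b, c} \<noteq> {a, c}" using ne by (auto simp: doubleton_eq_iff)
  then have "reachable (T - {{a, c}}) a b" "reachable (T - {{a, c}}) b c"
    using rT[OF assms(1)] rT[OF assms(2)] by simp_all
  then have "reachable (T - {{a, c}}) a c" by (rule reach_trans)
  then show False by (rule tree_no_cycle[OF tr ac])
qed

end


lemma set_tutte_E:
  assumes "e1 \<in> E" "e2 \<in> E" "e3 \<in> E" "e4 \<in> E" "e5 \<in> E" "f1 \<notin> E" "f2 \<notin> E"
  shows "E = (((E - {e5}) - {e1, e2} \<union> {f1}) - {e3, e4} \<union> {f2} - {f1, f2}) \<union> {e1, e2, e3, e4, e5}"
proof -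
  have "f1 \<noteq> e3" "f1 \<noteq> e4" "f1 \<noteq> e5" "f2 \<noteq> e5" using assms by auto
  then show ?thesis using assms by auto
qed

lemma set_tutte_T:
  assumes "e1 \<in> T" "e2 \<in> T" "e3 \<in> T" "e4 \<in> T" "f1 \<notin> T" "f2 \<notin> T"
  shows "T = ((T - {e1, e2} \<union> {f1}) - {e3, e4} \<union> {f2} - {f1, f2}) \<union> {e1, e2, e3, e4}"
proof -
  have "f1 \<noteq> e3" "f1 \<noteq> e4" using assms by auto
  then show ?thesis using assms by auto
qed

lemma inv_simple: "dinv V E T R \<Longrightarrow> simple_graph V E" unfolding dinv_def by (elim conjE)
lemma inv_tree: "dinv V E T R \<Longrightarrow> tree V T" by (simp add: dinv_def)
lemma inv_E: "dinv V E T R \<Longrightarrow> E = T \<union> R" unfolding dinv_def by (elim conjE)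
lemma inv_dj: "dinv V E T R \<Longrightarrow> T \<inter> R = {}" by (simp add: dinv_def)

context dec begin

lemma no_4cycle:
  assumes "{a, b} \<in> T" "{b, c} \<in> T" "{c, d} \<in> T" "{d, a} \<in> T"
    and "a \<noteq> c" "b \<noteq> d"
  shows False
proof -
  have ne: "a \<noteq> b" "b \<noteq> c" "c \<noteq> d" "d \<noteq> a" using edgeE assms(1-4) TE by blast+
  have "{a, b} \<noteq> {d, a}" "{b, c} \<noteq> {d, a}" "{c, d} \<noteq> {d, a}"
    using ne assms(5,6) by (auto simp: doubleton_eq_iff)
  then have r: "reachable (T - {{d, a}}) a b" "reachable (T - {{d, a}}) b c" "reachable (T - {{d, a}}) c d"
    using rT[OF assms(1)] rT[OF assms(2)] rT[OF assms(3)] by simp_all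
  have "reachable (T - {{d, a}}) a d" using reach_trans[OF reach_trans[OF r(1) r(2)] r(3)] .
  then have "reachable (T - {{d, a}}) d a" by (rule reach_sym)
  then show False by (rule tree_no_cycle[OF tr assms(4)])
qed

lemma tutte_red:
  assumes pq: "{p, q} \<in> M"
    and nbp: "nb T p = {{p, a1}, {p, b1}}" and nbq: "nb T q = {{q, a2}, {q, b2}}"
    and n1: "{a1, b1} \<notin> E" and n2: "{a2, b2} \<notin> E"
  shows "\<exists>V' E' T' M'. cubic V' E' \<and> card V' < card V \<and> three_decomposition V' E' T' C M' \<and>
           tutte_ext (V', E', T') (V, E, T)"
proof -
  have pqV: "p \<noteq> q" "p \<in> V" "q \<in> V" using edgeE pq ME by blast+
  have qp: "{q, p} \<in> M" using pq by (simp add: insert_commute)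
  have "{p, a1} \<in> nb T p" "{p, b1} \<in> nb T p" using nbp by simp_all
  then have Tp: "{p, a1} \<in> T" "{p, b1} \<in> T" by (simp_all add: nb_in)
  have "{q, a2} \<in> nb T q" "{q, b2} \<in> nb T q" using nbq by simp_all
  then have Tq: "{q, a2} \<in> T" "{q, b2} \<in> T" by (simp_all add: nb_in)
  have "card {{p, a1}, {p, b1}} = 2" using M_edge_deg(1)[OF pq] nbp by (simp add: degree_nb)
  then have ab1: "a1 \<noteq> b1" by auto
  have "card {{q, a2}, {q, b2}} = 2" using M_edge_deg(1)[OF qp] nbq by (simp add: degree_nb)
  then have ab2: "a2 \<noteq> b2" by auto
  have nbEp: "nb E p = {{p, a1}, {p, b1}, {p, q}}" by (rule nbE_M[OF pq nbp])
  have nbEq: "nb E q = {{q, a2}, {q, b2}, {q, p}}" by (rule nbE_M[OF qp nbq])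
  have "{p, a1} \<noteq> {p, q}" "{p, b1} \<noteq> {p, q}" using disjTM Tp pq by blast+
  then have qa1: "q \<noteq> a1" "q \<noteq> b1" by auto
  have "{q, a2} \<noteq> {q, p}" "{q, b2} \<noteq> {q, p}" using disjTM Tq qp by blast+
  then have pa2: "p \<noteq> a2" "p \<noteq> b2" by auto
  have pa1: "p \<noteq> a1" "p \<noteq> b1" using edgeE Tp TE by blast+
  have qa2: "q \<noteq> a2" "q \<noteq> b2" using edgeE Tq TE by blast+
  have d12: "{a1, b1} \<noteq> {a2, b2}"
  proof
    assume eq: "{a1, b1} = {a2, b2}"
    have "{q, a1} \<in> T \<and> {q, b1} \<in> T"
    proof (cases "a1 = a2")
      case True
      then have "b1 = b2" using eq ab1 by (auto simp: doubleton_eq_iff)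
      then show ?thesis using True Tq by simp
    next
      case False
      then have "a1 = b2" "b1 = a2" using eq by (auto simp: doubleton_eq_iff)
      then show ?thesis using Tq by simp
    qed
    then have h: "{a1, q} \<in> T" "{q, b1} \<in> T" "{b1, p} \<in> T"
      using Tp by (simp_all add: insert_commute)
    show False by (rule no_4cycle[OF Tp(1) h pqV(1) ab1])
  qed
  define R0 where "R0 = (C \<union> M) - {{p, q}}"
  define M' where "M' = M - {{p, q}}"
  define E0 where "E0 = E - {{p, q}}"
  have R0: "R0 = C \<union> M'" using pq dj(3) by (auto simp: R0_def M'_def)
  have I0: "dinv V E0 T R0" unfolding E0_def R0_def by (rule inv_del[OF inv0]) (use pq in simp)
  have s0: "simple_graph V E0" using inv_simple[OF I0] .
  have nbE0p: "nb E0 p = {{p, a1}, {p, b1}}"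
    unfolding E0_def nb_del nbEp using qa1 by (auto simp: doubleton_eq_iff)
  have n1': "{a1, b1} \<notin> E0" using n1 by (simp add: E0_def)
  define E1 where "E1 = supp E0 p a1 b1"
  define T1 where "T1 = supp T p a1 b1"
  have I1: "dinv (V - {p}) E1 T1 R0" unfolding E1_def T1_def
    by (rule inv_supp[OF I0 pqV(2) nbE0p ab1 n1' Tp])
  have s1: "simple_graph (V - {p}) E1" using inv_simple[OF I1] .
  have nbE1q: "nb E1 q = {{q, a2}, {q, b2}}"
  proof -
    have "nb E1 q = nb E0 q" unfolding E1_def by (rule nb_supp_other) (use pqV qa1 in auto)
    also have "\<dots> = nb E q - {{p, q}}" by (simp add: E0_def nb_del)
    also have "\<dots> = {{q, a2}, {q, b2}}" unfolding nbEq using pa2 by (auto simp: doubleton_eq_iff)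
    finally show ?thesis .
  qed
  have n2': "{a2, b2} \<notin> E1" using n2 d12 by (simp add: E1_def supp_def E0_def)
  have Tq1: "{q, a2} \<in> T1" "{q, b2} \<in> T1" using Tq qa1 pqV(1) by (auto simp: T1_def supp_def doubleton_eq_iff)
  have qV1: "q \<in> V - {p}" using pqV by simp
  define E2 where "E2 = supp E1 q a2 b2"
  define T2 where "T2 = supp T1 q a2 b2"
  define V2 where "V2 = V - {p} - {q}"
  have I2: "dinv V2 E2 T2 R0" unfolding E2_def T2_def V2_def
    by (rule inv_supp[OF I1 qV1 nbE1q ab2 n2' Tq1])
  have s2: "simple_graph V2 E2" and tr2: "tree V2 T2" and E2u: "E2 = T2 \<union> R0" and dj2: "T2 \<inter> R0 = {}"
    using inv_simple[OF I2] inv_tree[OF I2] inv_E[OF I2] inv_dj[OF I2] by auto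
  have degs: "degree E2 v = 3" if v: "v \<in> V2" for v
  proof -
    have "degree E2 v = degree E1 v"
      unfolding E2_def by (rule supp_facts(2)[OF s1 qV1 nbE1q ab2 n2']) (use v in \<open>simp add: V2_def\<close>)
    also have "\<dots> = degree E0 v"
      unfolding E1_def by (rule supp_facts(2)[OF s0 pqV(2) nbE0p ab1 n1']) (use v in \<open>simp add: V2_def\<close>)
    also have "\<dots> = degree E v"
      unfolding E0_def degree_nb using v by (simp add: nb_del_other V2_def)
    also have "\<dots> = 3" using deg3 v by (simp add: V2_def)
    finally show ?thesis .
  qed
  have cub2: "cubic V2 E2" using s2 degs by (simp add: cubic_def)
  have card2: "card V2 < card V"
  proof -
    have "V2 \<subset> V" using pqV by (auto simp: V2_def)
    then show ?thesis using finV by (simp add: psubset_card_mono)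
  qed
  have td2: "three_decomposition V2 E2 T2 C M'"
  proof -
    have "spanning_tree V2 E2 T2" using tr2 E2u by (auto simp: spanning_tree_iff)
    moreover have "two_regular E2 C" using E2u R0 degC by (auto simp: two_regular_def)
    moreover have "matching E2 M'"
    proof -
      have "degree M' v \<le> 1" for v
      proof -
        have "nb M' v \<subseteq> nb M v" by (auto simp: M'_def nb_def)
        then have "card (nb M' v) \<le> card (nb M v)" using finM by (simp add: card_mono nb_def)
        then show ?thesis using degM[of v] by (simp add: degree_nb)
      qed
      then show ?thesis using E2u R0 by (auto simp: matching_def)
    qed
    moreover have "T2 \<union> C \<union> M' = E2" using E2u R0 by auto
    moreover have "T2 \<inter> C = {}" "T2 \<inter> M' = {}" using dj2 R0 by auto
    moreover have "C \<inter> M' = {}" using dj(3) by (auto simp: M'_def)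
    ultimately show ?thesis by (simp add: three_decomposition_def)
  qed
  have ext: "tutte_ext (V2, E2, T2) (V, E, T)"
  proof -
    have f1T2: "{a1, b1} \<in> T2"
      using qa1 by (auto simp: T2_def T1_def supp_def doubleton_eq_iff)
    have f2T2: "{a2, b2} \<in> T2" by (simp add: T2_def supp_def)
    have VV: "V = V2 \<union> {p, q}" using pqV by (auto simp: V2_def)
    have ppV: "p \<notin> V2" "q \<notin> V2" by (auto simp: V2_def)
    have Ep: "{p, a1} \<in> E" "{p, b1} \<in> E" "{q, a2} \<in> E" "{q, b2} \<in> E" using Tp Tq TE by auto
    have pqE: "{p, q} \<in> E" using pq ME by auto
    have EE: "E = (E2 - {{a1, b1}, {a2, b2}}) \<union> {{p, a1}, {p, b1}, {q, a2}, {q, b2}, {p, q}}"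
      unfolding E2_def E1_def E0_def supp_def
      by (rule set_tutte_E[OF Ep pqE n1 n2])
    have n1T: "{a1, b1} \<notin> T" "{a2, b2} \<notin> T" using n1 n2 TE by auto
    have TT: "T = (T2 - {{a1, b1}, {a2, b2}}) \<union> {{p, a1}, {p, b1}, {q, a2}, {q, b2}}"
      unfolding T2_def T1_def supp_def
      by (rule set_tutte_T[OF Tp Tq n1T])
    have c: "{a1, p} = {p, a1}" "{a2, q} = {q, a2}" by (simp_all add: insert_commute)
    have EE': "E = (E2 - {{a1, b1}, {a2, b2}}) \<union> {{a1, p}, {p, b1}, {a2, q}, {q, b2}, {p, q}}"
      unfolding c by (rule EE)
    have TT': "T = (T2 - {{a1, b1}, {a2, b2}}) \<union> {{a1, p}, {p, b1}, {a2, q}, {q, b2}}"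
      unfolding c by (rule TT)
    show ?thesis unfolding tutte_ext_def prod.case
      apply (rule exI[of _ a1], rule exI[of _ b1], rule exI[of _ a2], rule exI[of _ b2],
             rule exI[of _ p], rule exI[of _ q])
      using f1T2 f2T2 d12 ppV pqV(1) VV EE' TT' by (intro conjI)
  qed
  show ?thesis using cub2 card2 td2 ext by blast
qed

end


lemma set_diam_E:
  assumes "e1 \<in> E" "e2 \<in> E" "e3 \<in> E" "e4 \<in> E" "e5 \<in> E" "e6 \<in> E" "e7 \<in> E"
    and "g1 \<notin> E" "g2 \<notin> E" "g3 \<notin> E" "f \<notin> E"
  shows "E = (((((((E - {e6}) - {e7}) - {e1, e2} \<union> {g1}) - {g1, e3} \<union> {g2}) - {g2, e4} \<union> {g3})
           - {g3, e5} \<union> {f}) - {f}) \<union> {e1, e2, e3, e4, e5, e6, e7}"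
proof -
  have "g1 \<noteq> e3" "g2 \<noteq> e4" "g3 \<noteq> e5" using assms by auto
  then show ?thesis using assms by auto
qed

lemma set_diam_T:
  assumes "e1 \<in> T" "e2 \<in> T" "e3 \<in> T" "e4 \<in> T" "e5 \<in> T"
    and "g1 \<notin> T" "g2 \<notin> T" "g3 \<notin> T" "f \<notin> T"
  shows "T = ((((((T - {e1, e2} \<union> {g1}) - {g1, e3} \<union> {g2}) - {g2, e4} \<union> {g3})
           - {g3, e5} \<union> {f}) - {f}) \<union> {e1, e2, e3, e4, e5})"
proof -
  have "g1 \<noteq> e3" "g2 \<noteq> e4" "g3 \<noteq> e5" using assms by auto
  then show ?thesis using assms by auto
qed

lemma del2: "c = e \<or> c = f \<Longrightarrow> a \<noteq> e \<Longrightarrow> b \<noteq> e \<Longrightarrow> a \<noteq> f \<Longrightarrow> b \<noteq> f \<Longrightarrow>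
  {a, b, c} - {e} - {f} = {a, b}"
  by auto

lemma dne: "a \<notin> {c, d} \<Longrightarrow> {a, b} \<noteq> {c, d}"
  by auto

context dec begin

lemma nbT_mem: "nb T v = {{v, a}, {v, b}} \<Longrightarrow> {v, a} \<in> T \<and> {v, b} \<in> T"
proof -
  assume h: "nb T v = {{v, a}, {v, b}}"
  have "{v, a} \<in> nb T v" "{v, b} \<in> nb T v" using h by simp_all
  then show ?thesis by (simp add: nb_in)
qed

lemma diamond_red:
  assumes M12: "{d1, d2} \<in> M" and M34: "{d3, d4} \<in> M"
    and nb1: "nb T d1 = {{d1, x}, {d1, d3}}" and nb2: "nb T d2 = {{d2, d3}, {d2, d4}}"
    and nb3: "nb T d3 = {{d3, d1}, {d3, d2}}" and nb4: "nb T d4 = {{d4, d2}, {d4, y}}"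
    and dd: "d1 \<noteq> d2" "d1 \<noteq> d3" "d1 \<noteq> d4" "d2 \<noteq> d3" "d2 \<noteq> d4" "d3 \<noteq> d4"
    and xd: "x \<noteq> d1" "x \<noteq> d2" "x \<noteq> d3" "x \<noteq> d4"
    and yd: "y \<noteq> d1" "y \<noteq> d2" "y \<noteq> d3" "y \<noteq> d4"
    and xy: "x \<noteq> y" and nxy: "{x, y} \<notin> E"
  shows "\<exists>V' E' T' M'. cubic V' E' \<and> card V' < card V \<and> three_decomposition V' E' T' C M' \<and>
           diamond_ext (V', E', T') (V, E, T)"
proof -
  have V: "d1 \<in> V" "d2 \<in> V" "d3 \<in> V" "d4 \<in> V" using edgeE M12 M34 ME by blast+
  have M21: "{d2, d1} \<in> M" and M43: "{d4, d3} \<in> M" using M12 M34 by (simp_all add: insert_commute)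
  have T1: "{d1, x} \<in> T" "{d1, d3} \<in> T" using nbT_mem[OF nb1] by auto
  have T2: "{d2, d3} \<in> T" "{d2, d4} \<in> T" using nbT_mem[OF nb2] by auto
  have T4: "{d4, y} \<in> T" using nbT_mem[OF nb4] by auto
  have nbE1: "nb E d1 = {{d1, x}, {d1, d3}, {d1, d2}}" by (rule nbE_M[OF M12 nb1])
  have nbE2: "nb E d2 = {{d2, d3}, {d2, d4}, {d2, d1}}" by (rule nbE_M[OF M21 nb2])
  have nbE3: "nb E d3 = {{d3, d1}, {d3, d2}, {d3, d4}}" by (rule nbE_M[OF M34 nb3])
  have nbE4: "nb E d4 = {{d4, d2}, {d4, y}, {d4, d3}}" by (rule nbE_M[OF M43 nb4])
  define R0 where "R0 = (C \<union> M) - {{d1, d2}} - {{d3, d4}}"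
  define M' where "M' = M - {{d1, d2}} - {{d3, d4}}"
  define E0 where "E0 = E - {{d1, d2}} - {{d3, d4}}"
  have R0: "R0 = C \<union> M'" using M12 M34 dj(3) by (auto simp: R0_def M'_def)
  have I0: "dinv V E0 T R0" unfolding E0_def R0_def
  proof (rule inv_del)
    show "dinv V (E - {{d1, d2}}) T (C \<union> M - {{d1, d2}})" by (rule inv_del[OF inv0]) (use M12 in simp)
    show "{d3, d4} \<in> C \<union> M - {{d1, d2}}" using M34 dd by (auto simp: doubleton_eq_iff)
  qed
  have s0: "simple_graph V E0" using inv_simple[OF I0] .
  have nb01: "nb E0 d1 = {{d1, x}, {d1, d3}}"
    unfolding E0_def nb_del nbE1 by (rule del2) (use dd xd in \<open>simp_all add: doubleton_same dne\<close>)
  have nb02: "nb E0 d2 = {{d2, d3}, {d2, d4}}"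
    unfolding E0_def nb_del nbE2 by (rule del2) (use dd in \<open>simp_all add: doubleton_eq_iff\<close>)
  have nb03: "nb E0 d3 = {{d3, d1}, {d3, d2}}"
    unfolding E0_def nb_del nbE3 by (rule del2) (use dd in \<open>simp_all add: doubleton_eq_iff\<close>)
  have nb04: "nb E0 d4 = {{d4, d2}, {d4, y}}"
    unfolding E0_def nb_del nbE4 by (rule del2) (use dd yd in \<open>simp_all add: doubleton_eq_iff\<close>)
  have xd2E: "{x, d2} \<notin> E"
  proof
    assume "{x, d2} \<in> E"
    then have "{d2, x} \<in> E" by (simp add: insert_commute)
    then show False using nb3_edge[OF nbE2] xd by blast
  qed
  have xd3E: "{x, d3} \<notin> E"
  proof
    assume "{x, d3} \<in> E"
    then have "{d3, x} \<in> E" by (simp add: insert_commute)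
    then show False using nb3_edge[OF nbE3] xd by blast
  qed
  have xd4E: "{x, d4} \<notin> E"
  proof
    assume "{x, d4} \<in> E"
    then have "{d4, x} \<in> E" by (simp add: insert_commute)
    then show False using nb3_edge[OF nbE4] xd xy by blast
  qed
  define E1 where "E1 = supp E0 d1 x d3"
  define T1' where "T1' = supp T d1 x d3"
  have n1: "{x, d3} \<notin> E0" using xd3E by (simp add: E0_def)
  have I1: "dinv (V - {d1}) E1 T1' R0" unfolding E1_def T1'_def
    by (rule inv_supp[OF I0 V(1) nb01 xd(3) n1 T1])
  have s1: "simple_graph (V - {d1}) E1" using inv_simple[OF I1] .
  have nb13: "nb E1 d3 = {{d3, x}, {d3, d2}}"
  proof -
    have "nb E1 d3 = nb E0 d3 - {{d1, d3}} \<union> {{d3, x}}"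
      unfolding E1_def by (rule nb_supp_y) (use dd xd in auto)
    then show ?thesis unfolding nb03 using dd xd by (auto simp: doubleton_eq_iff)
  qed
  have nb12: "nb E1 d2 = {{d2, d3}, {d2, d4}}"
    unfolding E1_def using nb02 dd xd by (subst nb_supp_other) auto
  have nb14: "nb E1 d4 = {{d4, d2}, {d4, y}}"
    unfolding E1_def using nb04 dd xd by (subst nb_supp_other) auto
  have T1s: "{d3, x} \<in> T1'" "{d3, d2} \<in> T1'"
    using T2 dd xd by (auto simp: T1'_def supp_def doubleton_eq_iff insert_commute)
  define E2 where "E2 = supp E1 d3 x d2"
  define T2' where "T2' = supp T1' d3 x d2"
  have n2: "{x, d2} \<notin> E1" using xd2E dd by (auto simp: E1_def E0_def supp_def doubleton_eq_iff)
  have d3V1: "d3 \<in> V - {d1}" using V dd by auto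
  have I2: "dinv (V - {d1} - {d3}) E2 T2' R0" unfolding E2_def T2'_def
    by (rule inv_supp[OF I1 d3V1 nb13 xd(2) n2 T1s])
  have s2: "simple_graph (V - {d1} - {d3}) E2" using inv_simple[OF I2] .
  have nb22: "nb E2 d2 = {{d2, x}, {d2, d4}}"
  proof -
    have "nb E2 d2 = nb E1 d2 - {{d3, d2}} \<union> {{d2, x}}"
      unfolding E2_def by (rule nb_supp_y) (use dd xd in auto)
    then show ?thesis unfolding nb12 using dd xd by (auto simp: doubleton_eq_iff)
  qed
  have nb24: "nb E2 d4 = {{d4, d2}, {d4, y}}"
    unfolding E2_def using nb14 dd xd by (subst nb_supp_other) auto
  have T2s: "{d2, x} \<in> T2'" "{d2, d4} \<in> T2'"
  proof -
    have "{d2, d4} \<in> T1'" using T2 dd xd by (auto simp: T1'_def supp_def doubleton_eq_iff)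
    then show "{d2, d4} \<in> T2'" using dd xd by (auto simp: T2'_def supp_def doubleton_eq_iff)
    show "{d2, x} \<in> T2'" by (auto simp: T2'_def supp_def insert_commute)
  qed
  define E3 where "E3 = supp E2 d2 x d4"
  define T3' where "T3' = supp T2' d2 x d4"
  have n3: "{x, d4} \<notin> E2" using xd4E dd xd by (auto simp: E2_def E1_def E0_def supp_def doubleton_eq_iff)
  have d2V2: "d2 \<in> V - {d1} - {d3}" using V dd by auto
  have I3: "dinv (V - {d1} - {d3} - {d2}) E3 T3' R0" unfolding E3_def T3'_def
    by (rule inv_supp[OF I2 d2V2 nb22 xd(4) n3 T2s])
  have s3: "simple_graph (V - {d1} - {d3} - {d2}) E3" using inv_simple[OF I3] .
  have nb34: "nb E3 d4 = {{d4, x}, {d4, y}}"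
  proof -
    have "nb E3 d4 = nb E2 d4 - {{d2, d4}} \<union> {{d4, x}}"
      unfolding E3_def by (rule nb_supp_y) (use dd xd in auto)
    then show ?thesis unfolding nb24 using dd xd yd by (auto simp: doubleton_eq_iff)
  qed
  have T3s: "{d4, x} \<in> T3'" "{d4, y} \<in> T3'"
  proof -
    have "{d4, y} \<in> T1'" using T4 dd xd yd by (auto simp: T1'_def supp_def doubleton_eq_iff)
    then have "{d4, y} \<in> T2'" using dd xd yd by (auto simp: T2'_def supp_def doubleton_eq_iff)
    then show "{d4, y} \<in> T3'" using dd xd yd by (auto simp: T3'_def supp_def doubleton_eq_iff)
    show "{d4, x} \<in> T3'" by (auto simp: T3'_def supp_def insert_commute)
  qed
  define E4 where "E4 = supp E3 d4 x y"
  define T4' where "T4' = supp T3' d4 x y"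
  define V4 where "V4 = V - {d1} - {d3} - {d2} - {d4}"
  have n4: "{x, y} \<notin> E3" using nxy xy yd by (auto simp: E3_def E2_def E1_def E0_def supp_def doubleton_eq_iff)
  have d4V3: "d4 \<in> V - {d1} - {d3} - {d2}" using V dd by auto
  have I4: "dinv V4 E4 T4' R0" unfolding E4_def T4'_def V4_def
    by (rule inv_supp[OF I3 d4V3 nb34 xy n4 T3s])
  have s4: "simple_graph V4 E4" and tr4: "tree V4 T4'" and E4u: "E4 = T4' \<union> R0" and dj4: "T4' \<inter> R0 = {}"
    using inv_simple[OF I4] inv_tree[OF I4] inv_E[OF I4] inv_dj[OF I4] by auto
  have degs: "degree E4 v = 3" if v: "v \<in> V4" for v
  proof -
    have "degree E4 v = degree E3 v"
      unfolding E4_def by (rule supp_facts(2)[OF s3 d4V3 nb34 xy n4]) (use v in \<open>simp add: V4_def\<close>)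
    also have "\<dots> = degree E2 v"
      unfolding E3_def by (rule supp_facts(2)[OF s2 d2V2 nb22 xd(4) n3]) (use v in \<open>simp add: V4_def\<close>)
    also have "\<dots> = degree E1 v"
      unfolding E2_def by (rule supp_facts(2)[OF s1 d3V1 nb13 xd(2) n2]) (use v in \<open>simp add: V4_def\<close>)
    also have "\<dots> = degree E0 v"
      unfolding E1_def by (rule supp_facts(2)[OF s0 V(1) nb01 xd(3) n1]) (use v in \<open>simp add: V4_def\<close>)
    also have "\<dots> = degree E v"
      unfolding E0_def degree_nb using v by (simp add: nb_del_other V4_def)
    also have "\<dots> = 3" using deg3 v by (simp add: V4_def)
    finally show ?thesis .
  qed
  have cub4: "cubic V4 E4" using s4 degs by (simp add: cubic_def)
  have card4: "card V4 < card V"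
  proof -
    have "V4 \<subset> V" using V by (auto simp: V4_def)
    then show ?thesis using finV by (simp add: psubset_card_mono)
  qed
  have td4: "three_decomposition V4 E4 T4' C M'"
  proof -
    have "spanning_tree V4 E4 T4'" using tr4 E4u by (auto simp: spanning_tree_iff)
    moreover have "two_regular E4 C" using E4u R0 degC by (auto simp: two_regular_def)
    moreover have "matching E4 M'"
    proof -
      have "degree M' v \<le> 1" for v
      proof -
        have "nb M' v \<subseteq> nb M v" by (auto simp: M'_def nb_def)
        then have "card (nb M' v) \<le> card (nb M v)" using finM by (simp add: card_mono nb_def)
        then show ?thesis using degM[of v] by (simp add: degree_nb)
      qed
      then show ?thesis using E4u R0 by (auto simp: matching_def)
    qed
    moreover have "T4' \<union> C \<union> M' = E4" using E4u R0 by auto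
    moreover have "T4' \<inter> C = {}" "T4' \<inter> M' = {}" using dj4 R0 by auto
    moreover have "C \<inter> M' = {}" using dj(3) by (auto simp: M'_def)
    ultimately show ?thesis by (simp add: three_decomposition_def)
  qed
  have ext: "diamond_ext (V4, E4, T4') (V, E, T)"
  proof -
    have xyT4: "{x, y} \<in> T4'" by (simp add: T4'_def supp_def)
    have VV: "V = V4 \<union> {d1, d2, d3, d4}" using V by (auto simp: V4_def)
    have nV: "d1 \<notin> V4" "d2 \<notin> V4" "d3 \<notin> V4" "d4 \<notin> V4" by (auto simp: V4_def)
    have c: "{d1, x} = {x, d1}" "{d3, x} = {x, d3}" "{d2, x} = {x, d2}" "{d4, x} = {x, d4}"
      "{d2, d3} = {d3, d2}" "{d3, d1} = {d1, d3}" "{d4, d2} = {d2, d4}"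
      by (simp_all add: insert_commute)
    have eT: "{x, d1} \<in> T" "{d1, d3} \<in> T" "{d3, d2} \<in> T" "{d2, d4} \<in> T" "{d4, y} \<in> T"
      using T1 T2 T4 by (simp_all add: insert_commute)
    have eE: "{x, d1} \<in> E" "{d1, d3} \<in> E" "{d3, d2} \<in> E" "{d2, d4} \<in> E" "{d4, y} \<in> E"
        "{d1, d2} \<in> E" "{d3, d4} \<in> E"
      using eT TE M12 M34 ME by auto
    have gT: "{x, d3} \<notin> T" "{x, d2} \<notin> T" "{x, d4} \<notin> T" "{x, y} \<notin> T"
      using xd3E xd2E xd4E nxy TE by auto
    have EE: "E = (E4 - {{x, y}}) \<union> {{x, d1}, {d1, d3}, {d3, d2}, {d2, d4}, {d4, y}, {d1, d2}, {d3, d4}}"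
      unfolding E4_def E3_def E2_def E1_def E0_def supp_def c
      by (rule set_diam_E[OF eE xd3E xd2E xd4E nxy])
    have TT: "T = (T4' - {{x, y}}) \<union> {{x, d1}, {d1, d3}, {d3, d2}, {d2, d4}, {d4, y}}"
      unfolding T4'_def T3'_def T2'_def T1'_def supp_def c
      by (rule set_diam_T[OF eT gT])
    show ?thesis unfolding diamond_ext_def prod.case
      apply (rule exI[of _ x], rule exI[of _ y], rule exI[of _ d1], rule exI[of _ d2],
             rule exI[of _ d3], rule exI[of _ d4])
      using xyT4 nV dd VV EE TT by (intro conjI)
  qed
  show ?thesis using cub4 card4 td4 ext by blast
qed

end


definition RED :: "'a set \<Rightarrow> 'a set set \<Rightarrow> 'a set set \<Rightarrow> 'a set set \<Rightarrow> bool" where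
  "RED V E T C \<longleftrightarrow> (\<exists>V' E' T' M'. cubic V' E' \<and> card V' < card V \<and>
               three_decomposition V' E' T' C M' \<and>
               (tutte_ext (V', E', T') (V, E, T) \<or> diamond_ext (V', E', T') (V, E, T)))"

context dec begin

lemma tutte_RED:
  assumes "{p, q} \<in> M" "nb T p = {{p, a1}, {p, b1}}" "nb T q = {{q, a2}, {q, b2}}"
    "{a1, b1} \<notin> E" "{a2, b2} \<notin> E"
  shows "RED V E T C"
  using tutte_red[OF assms] unfolding RED_def by blast

lemma diamond_RED:
  assumes "{d1, d2} \<in> M" "{d3, d4} \<in> M"
    "nb T d1 = {{d1, x}, {d1, d3}}" "nb T d2 = {{d2, d3}, {d2, d4}}"
    "nb T d3 = {{d3, d1}, {d3, d2}}" "nb T d4 = {{d4, d2}, {d4, y}}"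
    "d1 \<noteq> d2" "d1 \<noteq> d3" "d1 \<noteq> d4" "d2 \<noteq> d3" "d2 \<noteq> d4" "d3 \<noteq> d4"
    "x \<noteq> d1" "x \<noteq> d2" "x \<noteq> d3" "x \<noteq> d4"
    "y \<noteq> d1" "y \<noteq> d2" "y \<noteq> d3" "y \<noteq> d4"
    "x \<noteq> y" "{x, y} \<notin> E"
  shows "RED V E T C"
  using diamond_red[OF assms] unfolding RED_def by blast

lemma C_edge_degC: "{v, w} \<in> C \<Longrightarrow> degree C v = 2"
proof -
  assume vw: "{v, w} \<in> C"
  have fin: "finite (nb C v)" using finC by (simp add: nb_def)
  have "{v, w} \<in> nb C v" using vw by (simp add: nb_def)
  then have "card (nb C v) \<noteq> 0" using fin by auto
  then show ?thesis using degC[of v] by (simp add: degree_nb)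
qed

lemma nbF2:
  assumes FE: "F \<subseteq> E" and "degree F v = 2" "{v, a} \<in> F" shows "\<exists>b. b \<noteq> a \<and> nb F v = {{v, a}, {v, b}}"
proof -
  have c2: "card (nb F v) = 2" using assms(2) by (simp add: degree_nb)
  have va: "{v, a} \<in> nb F v" using assms(3) by (simp add: nb_def)
  have fin: "finite (nb F v)" using finite_subset[OF FE finE] by (simp add: nb_def)
  have "card (nb F v - {{v, a}}) = 1" using c2 va fin by simp
  then obtain f where f1: "nb F v - {{v, a}} = {f}" by (auto simp: card_1_singleton_iff)
  then have f: "nb F v = {{v, a}, f}" "f \<noteq> {v, a}" using va by auto
  have "f \<in> nb F v" using f(1) by simp
  then have "f \<in> F" "v \<in> f" by (simp_all add: nb_in)
  then obtain b where b: "f = {v, b}" using edge_other[OF s, of f v] FE by auto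
  have "b \<noteq> a" using f(2) b by auto
  then show ?thesis using f b by auto
qed

lemma nbT2':
  assumes "degree T v = 2" shows "\<exists>a b. a \<noteq> b \<and> nb T v = {{v, a}, {v, b}}"
proof -
  have "nb T v \<noteq> {}" using assms by (auto simp: degree_nb)
  then obtain e where "e \<in> T" "v \<in> e" by (auto simp: nb_def)
  then obtain a where "e = {v, a}" using edge_other[OF s, of e v] TE by auto
  then have "{v, a} \<in> T" using \<open>e \<in> T\<close> by simp
  then obtain b where "b \<noteq> a" "nb T v = {{v, a}, {v, b}}" using nbT2[OF assms] by blast
  then show ?thesis by blast
qed

lemma no_5cycle:
  assumes "{a, b} \<in> T" "{b, c} \<in> T" "{c, d} \<in> T" "{d, e} \<in> T" "{e, a} \<in> T"
    and "a \<noteq> b" "a \<noteq> c" "a \<noteq> d" "a \<noteq> e" "b \<noteq> c" "b \<noteq> d" "b \<noteq> e" "c \<noteq> d" "c \<noteq> e" "d \<noteq> e"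
  shows False
proof -
  have "{a, b} \<noteq> {e, a}" "{b, c} \<noteq> {e, a}" "{c, d} \<noteq> {e, a}" "{d, e} \<noteq> {e, a}"
    using assms(6-) by (auto simp: doubleton_eq_iff)
  then have r: "reachable (T - {{e, a}}) a b" "reachable (T - {{e, a}}) b c" "reachable (T - {{e, a}}) c d"
     "reachable (T - {{e, a}}) d e"
    using rT[OF assms(1)] rT[OF assms(2)] rT[OF assms(3)] rT[OF assms(4)] by simp_all
  have "reachable (T - {{e, a}}) a e" using reach_trans[OF reach_trans[OF reach_trans[OF r(1) r(2)] r(3)] r(4)] .
  then have "reachable (T - {{e, a}}) e a" by (rule reach_sym)
  then show False by (rule tree_no_cycle[OF tr assms(5)])
qed

lemma no_6cycle:
  assumes "{a, b} \<in> T" "{b, c} \<in> T" "{c, d} \<in> T" "{d, e} \<in> T" "{e, f} \<in> T" "{f, a} \<in> T"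
    and "a \<noteq> b" "a \<noteq> c" "a \<noteq> d" "a \<noteq> e" "a \<noteq> f" "b \<noteq> c" "b \<noteq> d" "b \<noteq> e" "b \<noteq> f"
     "c \<noteq> d" "c \<noteq> e" "c \<noteq> f" "d \<noteq> e" "d \<noteq> f" "e \<noteq> f"
  shows False
proof -
  have "{a, b} \<noteq> {f, a}" "{b, c} \<noteq> {f, a}" "{c, d} \<noteq> {f, a}" "{d, e} \<noteq> {f, a}" "{e, f} \<noteq> {f, a}"
    using assms(7-) by (auto simp: doubleton_eq_iff)
  then have r: "reachable (T - {{f, a}}) a b" "reachable (T - {{f, a}}) b c" "reachable (T - {{f, a}}) c d"
     "reachable (T - {{f, a}}) d e" "reachable (T - {{f, a}}) e f"
    using rT[OF assms(1)] rT[OF assms(2)] rT[OF assms(3)] rT[OF assms(4)] rT[OF assms(5)] by simp_all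
  have "reachable (T - {{f, a}}) a f"
    using reach_trans[OF reach_trans[OF reach_trans[OF reach_trans[OF r(1) r(2)] r(3)] r(4)] r(5)] .
  then have "reachable (T - {{f, a}}) f a" by (rule reach_sym)
  then show False by (rule tree_no_cycle[OF tr assms(6)])
qed

lemma closed_reach:
  assumes cl: "\<And>p q. {p, q} \<in> T \<Longrightarrow> p \<in> S \<Longrightarrow> q \<in> S" and uS: "u \<in> S" and uV: "u \<in> V" and vV: "v \<in> V"
  shows "v \<in> S"
proof -
  have "reachable T u v" using tr uV vV by (auto simp: tree_def connected_on_def)
  then show ?thesis using reach_closed[of T S u v] cl uS by blast
qed

end


context dec begin

lemma Tm: "{a, b} \<in> T \<Longrightarrow> {b, a} \<in> T" by (simp add: insert_commute)
lemma Em: "{a, b} \<in> E \<Longrightarrow> {b, a} \<in> E" by (simp add: insert_commute)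
lemma Mm: "{a, b} \<in> M \<Longrightarrow> {b, a} \<in> M" by (simp add: insert_commute)
lemma Cm: "{a, b} \<in> C \<Longrightarrow> {b, a} \<in> C" by (simp add: insert_commute)

lemma TM_ne: "{v, a} \<in> T \<Longrightarrow> {v, b} \<in> M \<Longrightarrow> a \<noteq> b"
  using disjTM by blast

lemma TC_ne: "{v, a} \<in> T \<Longrightarrow> {v, b} \<in> C \<Longrightarrow> a \<noteq> b"
  using disjTC by blast

lemma Tne: "{a, b} \<in> T \<Longrightarrow> a \<noteq> b" using edgeE TE by blast
lemma TV: "{a, b} \<in> T \<Longrightarrow> a \<in> V \<and> b \<in> V" using edgeE TE by blast

lemma diamond_case:
  assumes uw: "{u, w} \<in> M" and xy: "{x, y} \<in> M"
    and nbu: "nb T u = {{u, x}, {u, y}}" and nbx: "nb T x = {{x, u}, {x, w}}"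
  shows "RED V E T C"
proof -
  have wu: "{w, u} \<in> M" and yx: "{y, x} \<in> M" using uw xy by (simp_all add: insert_commute)
  have Tux: "{u, x} \<in> T" "{u, y} \<in> T" using nbT_mem[OF nbu] by auto
  have Txw: "{x, w} \<in> T" using nbT_mem[OF nbx] by auto
  have uwne: "u \<noteq> w" using edgeE uw ME by blast
  have xyne: "x \<noteq> y" using edgeE xy ME by blast
  have xw: "x \<noteq> w" using TM_ne[OF Tux(1) uw] .
  have yw: "y \<noteq> w" using TM_ne[OF Tux(2) uw] .
  have ux: "u \<noteq> x" using Tne[OF Tux(1)] .
  have uy: "u \<noteq> y" using Tne[OF Tux(2)] .
  obtain a where a: "a \<noteq> x" "nb T w = {{w, x}, {w, a}}"
    using nbT2[OF M_edge_deg(1)[OF wu] Tm[OF Txw]] by blast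
  obtain b where b: "b \<noteq> u" "nb T y = {{y, u}, {y, b}}"
    using nbT2[OF M_edge_deg(1)[OF yx] Tm[OF Tux(2)]] by blast
  have Twa: "{w, a} \<in> T" using nbT_mem[OF a(2)] by auto
  have Tyb: "{y, b} \<in> T" using nbT_mem[OF b(2)] by auto
  have aw: "a \<noteq> w" using Tne[OF Twa] by auto
  have au: "a \<noteq> u" using TM_ne[OF Twa wu] .
  have by': "b \<noteq> y" using Tne[OF Tyb] by auto
  have bx: "b \<noteq> x" using TM_ne[OF Tyb yx] .
  have ay: "a \<noteq> y"
  proof
    assume "a = y"
    then have "{y, w} \<in> T" using Tm[OF Twa] by simp
    then show False using no_4cycle[OF Tm[OF Txw] Tm[OF Tux(1)] Tux(2)] uwne xyne by (simp add: Tm)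
  qed
  have bw: "b \<noteq> w"
  proof
    assume "b = w"
    then have "{y, w} \<in> T" using Tyb by simp
    then show False using no_4cycle[OF Tm[OF Txw] Tm[OF Tux(1)] Tux(2)] uwne xyne by (simp add: Tm)
  qed
  have ab: "a \<noteq> b"
  proof
    assume "a = b"
    then have "{y, a} \<in> T" using Tyb by simp
    then show False
      using no_5cycle[OF Tm[OF Twa] Tm[OF Txw] Tm[OF Tux(1)] Tux(2)] aw au ay xw uwne yw ux xyne uy a(1)
      by (simp add: Tm)
  qed
  have nbEu: "nb E u = {{u, x}, {u, y}, {u, w}}" by (rule nbE_M[OF uw nbu])
  have nbEw: "nb E w = {{w, x}, {w, a}, {w, u}}" by (rule nbE_M[OF wu a(2)])
  have nbEx: "nb E x = {{x, u}, {x, w}, {x, y}}" by (rule nbE_M[OF xy nbx])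
  have nbEy: "nb E y = {{y, u}, {y, b}, {y, x}}" by (rule nbE_M[OF yx b(2)])
  show ?thesis
  proof (cases "{a, b} \<in> E")
    case False
    show ?thesis
    proof (rule diamond_RED[of w u x y a b])
      show "{w, u} \<in> M" "{x, y} \<in> M" by (fact wu, fact xy)
      show "nb T w = {{w, a}, {w, x}}" using a(2) by (simp add: insert_commute)
      show "nb T u = {{u, x}, {u, y}}" by (fact nbu)
      show "nb T x = {{x, w}, {x, u}}" using nbx by (simp add: insert_commute)
      show "nb T y = {{y, u}, {y, b}}" by (fact b(2))
      show "{a, b} \<notin> E" by (fact False)
    qed (use uwne xw yw ux uy xyne aw au a(1) ay b(1) bw bx by' ab in auto)
  next
    case True
    have abT: "{a, b} \<notin> T"
    proof
      assume "{a, b} \<in> T"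
      then show False
        using no_6cycle[OF Tm[OF Twa] Tm[OF Txw] Tm[OF Tux(1)] Tux(2) Tyb] aw au ay xw uwne yw ux xyne uy a(1)
          ab b(1) bw bx by'
        by (simp add: Tm)
    qed
    have "{a, b} \<in> C \<or> {a, b} \<in> M" using True abT Eu by blast
    then show ?thesis
    proof
      assume abC: "{a, b} \<in> C"
      have nba: "nb T a = {{a, w}}" using nbT1[OF C_edge_deg(1)[OF abC] Tm[OF Twa]] .
      have nbb: "nb T b = {{b, y}}" using nbT1[OF C_edge_deg(1)[OF Cm[OF abC]] Tm[OF Tyb]] .
      define S where "S = {a, w, x, u, y, b}"
      have cl: "q \<in> S" if pq: "{p, q} \<in> T" and pS: "p \<in> S" for p q
      proof -
        have "p = a \<or> p = w \<or> p = x \<or> p = u \<or> p = y \<or> p = b" using pS by (simp add: S_def)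
        then show ?thesis
        proof (elim disjE)
          assume "p = a" then show ?thesis using nb1_edge[OF nba] pq by (simp add: S_def)
        next
          assume "p = w" then show ?thesis using nb2_edge[OF a(2)] pq by (auto simp: S_def)
        next
          assume "p = x" then show ?thesis using nb2_edge[OF nbx] pq by (auto simp: S_def)
        next
          assume "p = u" then show ?thesis using nb2_edge[OF nbu] pq by (auto simp: S_def)
        next
          assume "p = y" then show ?thesis using nb2_edge[OF b(2)] pq by (auto simp: S_def)
        next
          assume "p = b" then show ?thesis using nb1_edge[OF nbb] pq by (simp add: S_def)
        qed
      qed
      obtain c where c: "c \<noteq> b" "nb C a = {{a, b}, {a, c}}"
        using nbF2[OF CE C_edge_degC[OF abC] abC] by blast
      have Cac: "{a, c} \<in> C" using c(2) by (auto simp: nb_def set_eq_iff)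
      have Eac: "{a, c} \<in> E" using Cac CE by auto
      have cV: "c \<in> V" using edgeE[OF Eac] by blast
      have uV: "u \<in> V" using TV[OF Tux(1)] by blast
      have uS: "u \<in> S" unfolding S_def by simp
      have cS: "c \<in> S" using closed_reach[OF cl uS uV cV] .
      have ca: "c \<noteq> a" using edgeE[OF Eac] by auto
      have cw: "c \<noteq> w" using TC_ne[OF Tm[OF Twa] Cac] by auto
      have cx: "c \<noteq> x"
      proof
        assume "c = x"
        then have "{x, a} \<in> E" using Em[OF Eac] by simp
        then show False using nb3_edge[OF nbEx] au aw ay by blast
      qed
      have cu: "c \<noteq> u"
      proof
        assume "c = u"
        then have "{u, a} \<in> E" using Em[OF Eac] by simp
        then show False using nb3_edge[OF nbEu] a(1) ay aw by blast
      qed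
      have cy: "c \<noteq> y"
      proof
        assume "c = y"
        then have "{y, a} \<in> E" using Em[OF Eac] by simp
        then show False using nb3_edge[OF nbEy] au ab a(1) by blast
      qed
      show ?thesis using cS ca cw cx cu cy c(1) by (simp add: S_def)
    next
      assume abM: "{a, b} \<in> M"
      obtain a' where a': "a' \<noteq> w" "nb T a = {{a, w}, {a, a'}}"
        using nbT2[OF M_edge_deg(1)[OF abM] Tm[OF Twa]] by blast
      obtain b' where b': "b' \<noteq> y" "nb T b = {{b, y}, {b, b'}}"
        using nbT2[OF M_edge_deg(1)[OF Mm[OF abM]] Tm[OF Tyb]] by blast
      have Taa: "{a, a'} \<in> T" using nbT_mem[OF a'(2)] by auto
      have Tbb: "{b, b'} \<in> T" using nbT_mem[OF b'(2)] by auto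
      have n1: "{w, a'} \<notin> E"
      proof
        assume "{w, a'} \<in> E"
        then have "a' = x \<or> a' = a \<or> a' = u" using nb3_edge[OF nbEw] by blast
        moreover have "a' \<noteq> a" using Tne[OF Taa] by auto
        moreover have "a' \<noteq> x"
        proof
          assume "a' = x"
          then have "{x, a} \<in> T" using Tm[OF Taa] by simp
          then show False using nb2_edge[OF nbx] au aw by blast
        qed
        moreover have "a' \<noteq> u"
        proof
          assume "a' = u"
          then have "{u, a} \<in> T" using Tm[OF Taa] by simp
          then show False using nb2_edge[OF nbu] a(1) ay by blast
        qed
        ultimately show False by blast
      qed
      have n2: "{y, b'} \<notin> E"
      proof
        assume "{y, b'} \<in> E"
        then have "b' = u \<or> b' = b \<or> b' = x" using nb3_edge[OF nbEy] by blast
        moreover have "b' \<noteq> b" using Tne[OF Tbb] by auto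
        moreover have "b' \<noteq> x"
        proof
          assume "b' = x"
          then have "{x, b} \<in> T" using Tm[OF Tbb] by simp
          then show False using nb2_edge[OF nbx] b(1) bw by blast
        qed
        moreover have "b' \<noteq> u"
        proof
          assume "b' = u"
          then have "{u, b} \<in> T" using Tm[OF Tbb] by simp
          then show False using nb2_edge[OF nbu] bx by' by blast
        qed
        ultimately show False by blast
      qed
      show ?thesis by (rule tutte_RED[OF abM a'(2) b'(2) n1 n2])
    qed
  qed
qed

end


context dec begin

lemma tri_case:
  assumes uw: "{u, w} \<in> M" and nbu: "nb T u = {{u, x}, {u, y}}" and xyE: "{x, y} \<in> E"
  shows "RED V E T C"
proof -
  have Tux: "{u, x} \<in> T" "{u, y} \<in> T" using nbT_mem[OF nbu] by auto
  have xyne: "x \<noteq> y" using edgeE[OF xyE] by blast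
  have ux: "u \<noteq> x" using Tne[OF Tux(1)] .
  have uy: "u \<noteq> y" using Tne[OF Tux(2)] .
  have xw: "x \<noteq> w" using TM_ne[OF Tux(1) uw] .
  have yw: "y \<noteq> w" using TM_ne[OF Tux(2) uw] .
  have uwne: "u \<noteq> w" using edgeE uw ME by blast
  have nbEu: "nb E u = {{u, x}, {u, y}, {u, w}}" by (rule nbE_M[OF uw nbu])
  have xyT: "{x, y} \<notin> T" using no_tri[OF Tm[OF Tux(1)] Tux(2) xyne] .
  have "{x, y} \<in> C \<or> {x, y} \<in> M" using xyE xyT Eu by blast
  then show ?thesis
  proof
    assume xyC: "{x, y} \<in> C"
    have nbx: "nb T x = {{x, u}}" using nbT1[OF C_edge_deg(1)[OF xyC] Tm[OF Tux(1)]] .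
    have nby: "nb T y = {{y, u}}" using nbT1[OF C_edge_deg(1)[OF Cm[OF xyC]] Tm[OF Tux(2)]] .
    define S where "S = {x, u, y}"
    have cl: "q \<in> S" if pq: "{p, q} \<in> T" and pS: "p \<in> S" for p q
    proof -
      have "p = x \<or> p = u \<or> p = y" using pS by (simp add: S_def)
      then show ?thesis
      proof (elim disjE)
        assume "p = x" then show ?thesis using nb1_edge[OF nbx] pq by (simp add: S_def)
      next
        assume "p = u" then show ?thesis using nb2_edge[OF nbu] pq by (auto simp: S_def)
      next
        assume "p = y" then show ?thesis using nb1_edge[OF nby] pq by (simp add: S_def)
      qed
    qed
    have uS: "u \<in> S" unfolding S_def by simp
    have uV: "u \<in> V" using TV[OF Tux(1)] by blast
    have wV: "w \<in> V" using edgeE uw ME by blast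
    have "w \<in> S" using closed_reach[OF cl uS uV wV] .
    then show ?thesis using uwne xw yw by (simp add: S_def)
  next
    assume xyM: "{x, y} \<in> M"
    have yx: "{y, x} \<in> M" using Mm[OF xyM] .
    obtain z where z: "z \<noteq> u" "nb T x = {{x, u}, {x, z}}"
      using nbT2[OF M_edge_deg(1)[OF xyM] Tm[OF Tux(1)]] by blast
    obtain z' where z': "z' \<noteq> u" "nb T y = {{y, u}, {y, z'}}"
      using nbT2[OF M_edge_deg(1)[OF yx] Tm[OF Tux(2)]] by blast
    show ?thesis
    proof (cases "z = w")
      case True
      show ?thesis by (rule diamond_case[OF uw xyM nbu]) (use z(2) True in simp)
    next
      case False
      note zw = False
      show ?thesis
      proof (cases "z' = w")
        case True
        have nbu': "nb T u = {{u, y}, {u, x}}" using nbu by (simp add: insert_commute)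
        show ?thesis by (rule diamond_case[OF uw yx nbu']) (use z'(2) True in simp)
      next
        case False
        have Txz: "{x, z} \<in> T" using nbT_mem[OF z(2)] by auto
        have Tyz: "{y, z'} \<in> T" using nbT_mem[OF z'(2)] by auto
        have n1: "{u, z} \<notin> E"
        proof
          assume "{u, z} \<in> E"
          then have "z = x \<or> z = y \<or> z = w" using nb3_edge[OF nbEu] by blast
          moreover have "z \<noteq> x" using Tne[OF Txz] by auto
          moreover have "z \<noteq> y" using TM_ne[OF Txz xyM] .
          ultimately show False using zw by blast
        qed
        have n2: "{u, z'} \<notin> E"
        proof
          assume "{u, z'} \<in> E"
          then have "z' = x \<or> z' = y \<or> z' = w" using nb3_edge[OF nbEu] by blast
          moreover have "z' \<noteq> y" using Tne[OF Tyz] by auto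
          moreover have "z' \<noteq> x" using TM_ne[OF Tyz yx] .
          ultimately show False using False by blast
        qed
        show ?thesis by (rule tutte_RED[OF xyM z(2) z'(2) n1 n2])
      qed
    qed
  qed
qed

lemma main_red:
  assumes nH: "\<not> HIST V E T" shows "RED V E T C"
proof -
  have "spanning_tree V E T" using TE tr by (simp add: spanning_tree_iff)
  then obtain u where uV: "u \<in> V" and du: "degree T u = 2" using nH by (auto simp: HIST_def)
  obtain w where uw: "{u, w} \<in> M" using deg2_M[OF uV du] by blast
  have wu: "{w, u} \<in> M" using Mm[OF uw] .
  obtain x y where xy: "nb T u = {{u, x}, {u, y}}" using nbT2'[OF du] by blast
  obtain x' y' where xy': "nb T w = {{w, x'}, {w, y'}}" using nbT2'[OF M_edge_deg(1)[OF wu]] by blast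
  show ?thesis
  proof (cases "{x, y} \<in> E")
    case True
    show ?thesis by (rule tri_case[OF uw xy True])
  next
    case False
    note F1 = False
    show ?thesis
    proof (cases "{x', y'} \<in> E")
      case True
      show ?thesis by (rule tri_case[OF wu xy' True])
    next
      case False
      show ?thesis by (rule tutte_RED[OF uw xy xy' F1 False])
    qed
  qed
qed

lemma HIST_M:
  assumes "HIST V E T" shows "M = {}"
proof (rule ccontr)
  assume "M \<noteq> {}"
  then obtain e where e: "e \<in> M" by blast
  have "e \<in> E" using e ME by blast
  then obtain v w where vw: "e = {v, w}" using s unfolding simple_graph_def by blast
  then have vw': "{v, w} \<in> M" using e by simp
  have "v \<in> V" using edgeE vw' ME by blast
  then show False using M_edge_deg(1)[OF vw'] assms by (auto simp: HIST_def)
qed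

end

lemma reduce_to_HIST:
  "cubic V E \<Longrightarrow> three_decomposition V E T C M \<Longrightarrow>
   \<exists>V' E' T' C' M'. cubic V' E' \<and> three_decomposition V' E' T' C' M' \<and>
               HIST V' E' T' \<and> dec_step\<^sup>*\<^sup>* (V', E', T', C', M') (V, E, T, C, M)"
proof (induction "card V" arbitrary: V E T C M rule: less_induct)
  case less
  interpret d: dec V E T C M using less.prems by (unfold_locales)
  show ?case
  proof (cases "HIST V E T")
    case True
    then show ?thesis using less.prems by blast
  next
    case False
    obtain V1 E1 T1 M1 where r: "cubic V1 E1" "card V1 < card V" "three_decomposition V1 E1 T1 C M1"
      "tutte_ext (V1, E1, T1) (V, E, T) \<or> diamond_ext (V1, E1, T1) (V, E, T)"
      using d.main_red[OF False] unfolding RED_def by blast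
    obtain V' E' T' C' M' where ih: "cubic V' E'" "three_decomposition V' E' T' C' M'"
      "HIST V' E' T'" "dec_step\<^sup>*\<^sup>* (V', E', T', C', M') (V1, E1, T1, C, M1)"
      using less.hyps[OF r(2) r(1) r(3)] by blast
    have "dec_step (V1, E1, T1, C, M1) (V, E, T, C, M)"
      unfolding dec_step_def using r(1,3,4) less.prems by simp
    then have "dec_step\<^sup>*\<^sup>* (V', E', T', C', M') (V, E, T, C, M)"
      using ih(4) by (rule rtranclp.rtrancl_into_rtrancl[rotated])
    then show ?thesis using ih(1-3) by blast
  qed
qed

theorem theorem1:
  fixes V :: "'a set" and E T C M :: "'a set set"
  assumes "cubic V E"
    and "three_decomposition V E T C M"
  shows "(HIST V E T \<longrightarrow> M = {}) \<and>
         (\<not> HIST V E T \<longrightarrow>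
            (\<exists>V' E' T' M'. cubic V' E' \<and> card V' < card V \<and>
               three_decomposition V' E' T' C M' \<and>
               (tutte_ext (V', E', T') (V, E, T) \<or> diamond_ext (V', E', T') (V, E, T)))) \<and>
         (\<exists>V' E' T' C' M'. cubic V' E' \<and> three_decomposition V' E' T' C' M' \<and>
               HIST V' E' T' \<and> dec_step\<^sup>*\<^sup>* (V', E', T', C', M') (V, E, T, C, M))"
proof -
  interpret d: dec V E T C M using assms by (unfold_locales)
  show ?thesis
    using d.HIST_M d.main_red[unfolded RED_def] reduce_to_HIST[OF assms] by blast
qed


end
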